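(* Let $f:\Sigma\to\mathbb{S}^4_1$ be a non-isotropic conformally immersed marginally trapped surface with non-zero mean curvature vector. Then the following are equivalent: (i) the quartic differential $Q=\langle f_{zz},f_{zz}\rangle dz^4$ is holomorphic; (ii) the quadratic differential $\delta=h(\xi_1-\xi_2)dz^2$ is holomorphic; (iii) $f$ has parallel mean curvature vector, $\nabla^\perp\mathbf H=0$.
   Context: $\mathbb{R}^5_1$ is $\mathbb{R}^5$ with $\langle x,y\rangle=x_0y_0+x_1y_1+x_2y_2+x_3y_3-x_4y_4$ (complex-bilinearly extended), $\mathbb{S}^4_1=\{\langle x,x\rangle=1\}$, future pointing means $\langle X,e_4\rangle<0$. $f$ conformal spacelike immersion with $\langle f_z,f_{\bar z}\rangle=e^{2u}$; positively oriented orthonormal normal frame $\{N_1,N_2\}$: $\langle N_1,N_1\rangle=1,\langle N_2,N_2\rangle=-1,\langle N_1,N_2\rangle=0$, $N_2$ future pointing, orientation of $\nu(f)$; $\xi_1=\langle f_{zz},N_1\rangle$, $\xi_2=-\langle f_{zz},N_2\rangle$ (so $Q=(\xi_1^2-\xi_2^2)dz^4$). $\mathbf H$: $f_{z\bar z}=-e^{2u}f+e^{2u}\mathbf H$; $\nabla^\perp$ normal connection; marginally trapped: $\langle\mathbf H,\mathbf H\rangle=0$, orientation chosen so $\mathbf H=h(N_1+N_2)$. Non-isotropic: $Q$ vanishes nowhere. *)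

theory Defs
  imports "HOL-Analysis.Analysis"
begin

text \<open>Lorentzian space R^5_1: vectors are real^5 (indices 0..4), the last index 4 is timelike.\<close>

definition lor :: "real^5 \<Rightarrow> real^5 \<Rightarrow> real" where
  "lor x y = (\<Sum>i\<in>UNIV. (if i = 4 then -1 else 1) * x$i * y$i)"

definition lorC :: "complex^5 \<Rightarrow> complex^5 \<Rightarrow> complex" where
  "lorC x y = (\<Sum>i\<in>UNIV. (if i = 4 then -1 else 1) * x$i * y$i)"

definition cvec :: "real^5 \<Rightarrow> complex^5" where
  "cvec v = (\<chi> i. complex_of_real (v$i))"

definition pdx :: "(complex \<Rightarrow> 'a::real_normed_vector) \<Rightarrow> complex \<Rightarrow> 'a" where
  "pdx g z = frechet_derivative g (at z) 1"

definition pdy :: "(complex \<Rightarrow> 'a::real_normed_vector) \<Rightarrow> complex \<Rightarrow> 'a" where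
  "pdy g z = frechet_derivative g (at z) \<i>"

fun Ck :: "nat \<Rightarrow> complex set \<Rightarrow> (complex \<Rightarrow> 'a::real_normed_vector) \<Rightarrow> bool" where
  "Ck 0 U g = continuous_on U g"
| "Ck (Suc n) U g = (g differentiable_on U \<and> Ck n U (pdx g) \<and> Ck n U (pdy g))"

definition smooth_on :: "complex set \<Rightarrow> (complex \<Rightarrow> 'a::real_normed_vector) \<Rightarrow> bool" where
  "smooth_on U g = (\<forall>n. Ck n U g)"

definition Dz :: "(complex \<Rightarrow> complex^5) \<Rightarrow> complex \<Rightarrow> complex^5" where
  "Dz G z = (\<chi> i. (pdx G z $ i - \<i> * pdy G z $ i) / 2)"

text \<open>Mean curvature vector H of f: f_{z zbar} = -e^{2u} f + e^{2u} H, where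
  e^{2u} = <f_z, f_zbar> = (<f_x,f_x> + <f_y,f_y>)/4 and f_{z zbar} = (f_xx + f_yy)/4.\<close>
definition meanH :: "(complex \<Rightarrow> real^5) \<Rightarrow> complex \<Rightarrow> real^5" where
  "meanH f z = f z + (1 / ((lor (pdx f z) (pdx f z) + lor (pdy f z) (pdy f z)) / 4))
                   *\<^sub>R ((1/4) *\<^sub>R (pdx (pdx f) z + pdy (pdy f) z))"

text \<open>Orthogonal projection onto the normal space spanned by N1 (<N1,N1>=1), N2 (<N2,N2>=-1).\<close>
definition normal_proj :: "real^5 \<Rightarrow> real^5 \<Rightarrow> real^5 \<Rightarrow> real^5" where
  "normal_proj N1 N2 v = lor v N1 *\<^sub>R N1 - lor v N2 *\<^sub>R N2"

definition nabla_perp_x :: "(complex \<Rightarrow> real^5) \<Rightarrow> (complex \<Rightarrow> real^5) \<Rightarrow> (complex \<Rightarrow> real^5) \<Rightarrow> complex \<Rightarrow> real^5" where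
  "nabla_perp_x N1 N2 V z = normal_proj (N1 z) (N2 z) (pdx V z)"

definition nabla_perp_y :: "(complex \<Rightarrow> real^5) \<Rightarrow> (complex \<Rightarrow> real^5) \<Rightarrow> (complex \<Rightarrow> real^5) \<Rightarrow> complex \<Rightarrow> real^5" where
  "nabla_perp_y N1 N2 V z = normal_proj (N1 z) (N2 z) (pdy V z)"

end

theory Submission
  imports Defs
begin

lemma pdx_has: "(G has_derivative D) (at z) \<Longrightarrow> pdx G z = D 1"
  unfolding pdx_def using frechet_derivative_at by metis

lemma pdy_has: "(G has_derivative D) (at z) \<Longrightarrow> pdy G z = D \<i>"
  unfolding pdy_def using frechet_derivative_at by metis

lemma has_derivative_pd:
  assumes "G differentiable (at z)"
  shows "(G has_derivative (\<lambda>h. Re h *\<^sub>R pdx G z + Im h *\<^sub>R pdy G z)) (at z)"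
proof -
  let ?D = "frechet_derivative G (at z)"
  have d: "(G has_derivative ?D) (at z)" using assms frechet_derivative_works by blast
  have l: "linear ?D" using assms linear_frechet_derivative by blast
  have "?D h = Re h *\<^sub>R ?D 1 + Im h *\<^sub>R ?D \<i>" for h
  proof -
    have "h = Re h *\<^sub>R 1 + Im h *\<^sub>R \<i>"
      by (simp add: complex_eq_iff)
    then have "?D h = ?D (Re h *\<^sub>R 1 + Im h *\<^sub>R \<i>)" by metis
    also have "\<dots> = Re h *\<^sub>R ?D 1 + Im h *\<^sub>R ?D \<i>"
      using l by (simp add: linear_add linear_scale)
    finally show ?thesis .
  qed
  note e = this
  have "?D = (\<lambda>h. Re h *\<^sub>R pdx G z + Im h *\<^sub>R pdy G z)"
    unfolding pdx_def pdy_def by (rule ext) (rule e)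
  with d show ?thesis by simp
qed

lemma has_derivative_local:
  assumes "open U" "z \<in> U" "\<And>w. w \<in> U \<Longrightarrow> G w = G' w"
  shows "(G has_derivative D) (at z) \<longleftrightarrow> (G' has_derivative D) (at z)"
proof
  assume "(G has_derivative D) (at z)"
  then show "(G' has_derivative D) (at z)"
    using has_derivative_transform_within_open[OF _ assms(1,2), of G D UNIV G'] assms(3) by blast
next
  assume "(G' has_derivative D) (at z)"
  then show "(G has_derivative D) (at z)"
    using has_derivative_transform_within_open[OF _ assms(1,2), of G' D UNIV G] assms(3) by metis
qed

lemma differentiable_local:
  assumes "open U" "z \<in> U" "\<And>w. w \<in> U \<Longrightarrow> G w = G' w"
  shows "G differentiable (at z) \<longleftrightarrow> G' differentiable (at z)"
  using has_derivative_local[OF assms] unfolding differentiable_def by auto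

lemma frechet_local:
  assumes "open U" "z \<in> U" "\<And>w. w \<in> U \<Longrightarrow> G w = G' w"
  shows "frechet_derivative G (at z) = frechet_derivative G' (at z)"
  unfolding frechet_derivative_def using has_derivative_local[OF assms] by auto

lemma pdx_local:
  assumes "open U" "z \<in> U" "\<And>w. w \<in> U \<Longrightarrow> G w = G' w"
  shows "pdx G z = pdx G' z"
  using frechet_local[OF assms] by (simp add: pdx_def)

lemma pdy_local:
  assumes "open U" "z \<in> U" "\<And>w. w \<in> U \<Longrightarrow> G w = G' w"
  shows "pdy G z = pdy G' z"
  using frechet_local[OF assms] by (simp add: pdy_def)

lemma pdx_bilinear:
  assumes "bounded_bilinear B" "A differentiable (at z)" "C differentiable (at z)"
  shows "pdx (\<lambda>w. B (A w) (C w)) z = B (pdx A z) (C z) + B (A z) (pdx C z)"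
  by (simp add: pdx_has[OF bounded_bilinear.FDERIV[OF assms(1) has_derivative_pd[OF assms(2)] has_derivative_pd[OF assms(3)]]] add.commute)

lemma pdy_bilinear:
  assumes "bounded_bilinear B" "A differentiable (at z)" "C differentiable (at z)"
  shows "pdy (\<lambda>w. B (A w) (C w)) z = B (pdy A z) (C z) + B (A z) (pdy C z)"
  by (simp add: pdy_has[OF bounded_bilinear.FDERIV[OF assms(1) has_derivative_pd[OF assms(2)] has_derivative_pd[OF assms(3)]]] add.commute)

lemma pdx_linear:
  assumes "bounded_linear L" "A differentiable (at z)"
  shows "pdx (\<lambda>w. L (A w)) z = L (pdx A z)"
  by (simp add: pdx_has[OF bounded_linear.has_derivative[OF assms(1) has_derivative_pd[OF assms(2)]]])

lemma pdy_linear: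
  assumes "bounded_linear L" "A differentiable (at z)"
  shows "pdy (\<lambda>w. L (A w)) z = L (pdy A z)"
  by (simp add: pdy_has[OF bounded_linear.has_derivative[OF assms(1) has_derivative_pd[OF assms(2)]]])

lemma pdx_add:
  assumes "A differentiable (at z)" "C differentiable (at z)"
  shows "pdx (\<lambda>w. A w + C w) z = pdx A z + pdx C z"
  by (simp add: pdx_has[OF has_derivative_add[OF has_derivative_pd[OF assms(1)] has_derivative_pd[OF assms(2)]]])

lemma pdy_add:
  assumes "A differentiable (at z)" "C differentiable (at z)"
  shows "pdy (\<lambda>w. A w + C w) z = pdy A z + pdy C z"
  by (simp add: pdy_has[OF has_derivative_add[OF has_derivative_pd[OF assms(1)] has_derivative_pd[OF assms(2)]]])

lemma pdx_const: "pdx (\<lambda>w. c) z = 0"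
  by (simp add: pdx_def)
lemma pdy_const: "pdy (\<lambda>w. c) z = 0"
  by (simp add: pdy_def)

lemma Ck_Suc_mono: "Ck (Suc n) U g \<Longrightarrow> Ck n U g"
proof (induction n arbitrary: g)
  case 0
  then show ?case by (simp add: differentiable_imp_continuous_on)
next
  case (Suc n)
  have "g differentiable_on U" "Ck (Suc n) U (pdx g)" "Ck (Suc n) U (pdy g)"
    using Suc.prems by (simp_all only: Ck.simps)
  then show ?case using Suc.IH[of "pdx g"] Suc.IH[of "pdy g"] by simp
qed

lemma Ck_mono': "m \<le> n \<Longrightarrow> Ck n U g \<Longrightarrow> Ck m U g"
proof (induction n arbitrary: m)
  case 0 then show ?case by simp
next
  case (Suc n) then show ?case
    by (metis Ck_Suc_mono le_Suc_eq)
qed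

lemma Ck_diff_at: "open U \<Longrightarrow> Ck (Suc n) U g \<Longrightarrow> z \<in> U \<Longrightarrow> g differentiable (at z)"
  by (simp add: differentiable_on_eq_differentiable_at)

lemma Ck_cong:
  assumes "open U" "\<And>w. w \<in> U \<Longrightarrow> g w = g' w" "Ck n U g"
  shows "Ck n U g'"
  using assms(2,3)
proof (induction n arbitrary: g g')
  case 0
  then show ?case by (simp cong: continuous_on_cong)
next
  case (Suc n)
  have d: "g' differentiable_on U"
    using Suc.prems differentiable_local[OF assms(1), of _ g g']
    by (simp add: differentiable_on_eq_differentiable_at[OF assms(1)])
  have px: "Ck n U (pdx g')"
    using Suc.IH[of "pdx g" "pdx g'"] Suc.prems pdx_local[OF assms(1), of _ g g'] by simp
  have py: "Ck n U (pdy g')"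
    using Suc.IH[of "pdy g" "pdy g'"] Suc.prems pdy_local[OF assms(1), of _ g g'] by simp
  show ?case using d px py by simp
qed

lemma Ck_const: "Ck n U (\<lambda>w. c)"
proof (induction n arbitrary: c)
  case 0 then show ?case by simp
next
  case (Suc n)
  have "pdx (\<lambda>w. c) = (\<lambda>w. 0)" "pdy (\<lambda>w. c) = (\<lambda>w. 0)"
    by (auto simp: pdx_const pdy_const)
  then show ?case using Suc by simp
qed

lemma Ck_add:
  assumes "open U"
  shows "Ck n U A \<Longrightarrow> Ck n U C \<Longrightarrow> Ck n U (\<lambda>w. A w + C w)"
proof (induction n arbitrary: A C)
  case 0 then show ?case by (simp add: continuous_on_add)
next
  case (Suc n)
  have dA: "\<And>z. z \<in> U \<Longrightarrow> A differentiable (at z)" and dC: "\<And>z. z \<in> U \<Longrightarrow> C differentiable (at z)"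
    using Suc.prems Ck_diff_at[OF assms] by blast+
  have d: "(\<lambda>w. A w + C w) differentiable_on U"
    using Suc.prems by (simp add: differentiable_on_add)
  have px: "Ck n U (pdx (\<lambda>w. A w + C w))"
    by (rule Ck_cong[OF assms, of "\<lambda>w. pdx A w + pdx C w"])
       (simp add: pdx_add dA dC, rule Suc.IH, use Suc.prems in simp_all)
  have py: "Ck n U (pdy (\<lambda>w. A w + C w))"
    by (rule Ck_cong[OF assms, of "\<lambda>w. pdy A w + pdy C w"])
       (simp add: pdy_add dA dC, rule Suc.IH, use Suc.prems in simp_all)
  show ?case using d px py by simp
qed

lemma Ck_linear:
  assumes "open U" "bounded_linear L"
  shows "Ck n U A \<Longrightarrow> Ck n U (\<lambda>w. L (A w))"
proof (induction n arbitrary: A)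
  case 0 then show ?case using bounded_linear.continuous_on[OF assms(2)] by simp
next
  case (Suc n)
  have dA: "\<And>z. z \<in> U \<Longrightarrow> A differentiable (at z)"
    using Suc.prems Ck_diff_at[OF assms(1)] by blast
  have d: "(\<lambda>w. L (A w)) differentiable_on U"
    unfolding differentiable_on_eq_differentiable_at[OF assms(1)]
  proof
    fix z assume z: "z \<in> U"
    show "(\<lambda>w. L (A w)) differentiable at z"
      using bounded_linear.has_derivative[OF assms(2) has_derivative_pd[OF dA[OF z]]]
      unfolding differentiable_def by blast
  qed
  have px: "Ck n U (pdx (\<lambda>w. L (A w)))"
    by (rule Ck_cong[OF assms(1), of "\<lambda>w. L (pdx A w)"])
       (simp add: dA pdx_linear[OF assms(2)], rule Suc.IH, use Suc.prems in simp_all)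
  have py: "Ck n U (pdy (\<lambda>w. L (A w)))"
    by (rule Ck_cong[OF assms(1), of "\<lambda>w. L (pdy A w)"])
       (simp add: dA pdy_linear[OF assms(2)], rule Suc.IH, use Suc.prems in simp_all)
  show ?case using d px py by simp
qed

lemma Ck_bilinear:
  assumes "open U" "bounded_bilinear B"
  shows "Ck n U A \<Longrightarrow> Ck n U C \<Longrightarrow> Ck n U (\<lambda>w. B (A w) (C w))"
proof (induction n arbitrary: A C)
  case 0 then show ?case using bounded_bilinear.continuous_on[OF assms(2)] by simp
next
  case (Suc n)
  have dA: "\<And>z. z \<in> U \<Longrightarrow> A differentiable (at z)" and dC: "\<And>z. z \<in> U \<Longrightarrow> C differentiable (at z)"
    using Suc.prems Ck_diff_at[OF assms(1)] by blast+
  have d: "(\<lambda>w. B (A w) (C w)) differentiable_on U"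
    unfolding differentiable_on_eq_differentiable_at[OF assms(1)]
  proof
    fix z assume z: "z \<in> U"
    show "(\<lambda>w. B (A w) (C w)) differentiable at z"
      using bounded_bilinear.FDERIV[OF assms(2) has_derivative_pd[OF dA[OF z]] has_derivative_pd[OF dC[OF z]]]
      unfolding differentiable_def by blast
  qed
  have An: "Ck n U A" "Ck n U C" using Suc.prems Ck_Suc_mono by blast+
  have px: "Ck n U (pdx (\<lambda>w. B (A w) (C w)))"
    by (rule Ck_cong[OF assms(1), of "\<lambda>w. B (pdx A w) (C w) + B (A w) (pdx C w)"])
       (simp add: dA dC pdx_bilinear[OF assms(2)],
        intro Ck_add[OF assms(1)] Suc.IH, use An Suc.prems in simp_all)
  have py: "Ck n U (pdy (\<lambda>w. B (A w) (C w)))"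
    by (rule Ck_cong[OF assms(1), of "\<lambda>w. B (pdy A w) (C w) + B (A w) (pdy C w)"])
       (simp add: dA dC pdy_bilinear[OF assms(2)],
        intro Ck_add[OF assms(1)] Suc.IH, use An Suc.prems in simp_all)
  show ?case using d px py by simp
qed

lemma Ck_inverse:
  fixes g :: "complex \<Rightarrow> real"
  assumes "open U" "\<And>w. w \<in> U \<Longrightarrow> g w \<noteq> 0"
  shows "Ck n U g \<Longrightarrow> Ck n U (\<lambda>w. inverse (g w))"
proof (induction n)
  case 0 then show ?case by (simp, intro continuous_on_inverse) (use assms in auto)
next
  case (Suc n)
  have dg: "\<And>z. z \<in> U \<Longrightarrow> g differentiable (at z)"
    using Suc.prems Ck_diff_at[OF assms(1)] by blast
  have hd: "((\<lambda>w. inverse (g w)) has_derivative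
      (\<lambda>h. - (inverse (g z) * (Re h *\<^sub>R pdx g z + Im h *\<^sub>R pdy g z) * inverse (g z)))) (at z)"
    if "z \<in> U" for z
    using Deriv.has_derivative_inverse[OF assms(2)[OF that] has_derivative_pd[OF dg[OF that]]] .
  have d: "(\<lambda>w. inverse (g w)) differentiable_on U"
    using hd unfolding differentiable_on_eq_differentiable_at[OF assms(1)] differentiable_def by blast
  have IHn: "Ck n U (\<lambda>w. inverse (g w))" using Suc.IH Suc.prems Ck_Suc_mono by blast
  have gn: "Ck n U (pdx g)" "Ck n U (pdy g)" using Suc.prems by simp_all
  have mul: "Ck n U (\<lambda>w. - (inverse (g w) * q w * inverse (g w)))" if "Ck n U q" for q
  proof -
    have "Ck n U (\<lambda>w. inverse (g w) * q w)"
      by (rule Ck_bilinear[OF assms(1) bounded_bilinear_mult IHn that])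
    then have "Ck n U (\<lambda>w. (inverse (g w) * q w) * inverse (g w))"
      by (rule Ck_bilinear[OF assms(1) bounded_bilinear_mult _ IHn])
    then show ?thesis
      by (rule Ck_linear[OF assms(1) bounded_linear_minus[OF bounded_linear_ident]])
  qed
  have px: "Ck n U (pdx (\<lambda>w. inverse (g w)))"
    by (rule Ck_cong[OF assms(1) _ mul[OF gn(1)]]) (simp add: pdx_has[OF hd])
  have py: "Ck n U (pdy (\<lambda>w. inverse (g w)))"
    by (rule Ck_cong[OF assms(1) _ mul[OF gn(2)]]) (simp add: pdy_has[OF hd])
  show ?case using d px py by simp
qed

lemma line_x:
  fixes g :: "complex \<Rightarrow> real"
  assumes "g differentiable (at (c + of_real s))"
  shows "((\<lambda>t. g (c + of_real t)) has_real_derivative pdx g (c + of_real s)) (at s)"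
proof -
  have h1: "((\<lambda>t. c + complex_of_real t) has_derivative (\<lambda>h. complex_of_real h)) (at s)"
    by (auto intro!: derivative_eq_intros)
  have "((\<lambda>t. g (c + of_real t)) has_derivative
     (\<lambda>h. Re (complex_of_real h) *\<^sub>R pdx g (c + of_real s) + Im (complex_of_real h) *\<^sub>R pdy g (c + of_real s))) (at s)"
    using has_derivative_compose[OF h1 has_derivative_pd[OF assms]] by simp
  then show ?thesis
    unfolding has_field_derivative_def by (rule has_derivative_eq_rhs) (simp add: fun_eq_iff)
qed

lemma line_y:
  fixes g :: "complex \<Rightarrow> real"
  assumes "g differentiable (at (c + \<i> * of_real s))"
  shows "((\<lambda>t. g (c + \<i> * of_real t)) has_real_derivative pdy g (c + \<i> * of_real s)) (at s)"
proof -
  have h1: "((\<lambda>t. c + \<i> * complex_of_real t) has_derivative (\<lambda>h. \<i> * complex_of_real h)) (at s)"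
    by (auto intro!: derivative_eq_intros)
  have "((\<lambda>t. g (c + \<i> * of_real t)) has_derivative
     (\<lambda>h. Re (\<i> * complex_of_real h) *\<^sub>R pdx g (c + \<i> * of_real s) + Im (\<i> * complex_of_real h) *\<^sub>R pdy g (c + \<i> * of_real s))) (at s)"
    using has_derivative_compose[OF h1 has_derivative_pd[OF assms]] by simp
  then show ?thesis
    unfolding has_field_derivative_def by (rule has_derivative_eq_rhs) (simp add: fun_eq_iff)
qed

lemma line_x':
  fixes g :: "complex \<Rightarrow> real"
  assumes "g differentiable (at (z + of_real s + \<i> * of_real \<sigma>))"
  shows "((\<lambda>s. g (z + of_real s + \<i> * of_real \<sigma>)) has_real_derivative pdx g (z + of_real s + \<i> * of_real \<sigma>)) (at s)"
proof -
  have e: "\<And>s. z + of_real s + \<i> * of_real \<sigma> = (z + \<i> * of_real \<sigma>) + of_real s" by (simp add: algebra_simps)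
  show ?thesis unfolding e by (rule line_x) (use assms e in simp)
qed

lemma line_y':
  fixes g :: "complex \<Rightarrow> real"
  assumes "g differentiable (at (z + of_real s + \<i> * of_real \<sigma>))"
  shows "((\<lambda>\<sigma>. g (z + of_real s + \<i> * of_real \<sigma>)) has_real_derivative pdy g (z + of_real s + \<i> * of_real \<sigma>)) (at \<sigma>)"
  by (rule line_y) (use assms in simp)

lemma abs_contra: "\<bar>(a::real)\<bar> < \<bar>c\<bar> / 2 \<Longrightarrow> \<bar>b\<bar> < \<bar>c\<bar> / 2 \<Longrightarrow> \<bar>c\<bar> \<le> \<bar>a\<bar> + \<bar>b\<bar> \<Longrightarrow> False"
  by linarith

lemma schwarz_real:
  fixes g :: "complex \<Rightarrow> real"
  assumes U: "open U" "z \<in> U" and g: "Ck 2 U g"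
  shows "pdy (pdx g) z = pdx (pdy g) z"
proof -
  have g2: "Ck (Suc (Suc 0)) U g" using g by (simp add: numeral_2_eq_2)
  have dg: "\<And>w. w \<in> U \<Longrightarrow> g differentiable (at w)"
    and dgx: "\<And>w. w \<in> U \<Longrightarrow> pdx g differentiable (at w)"
    and dgy: "\<And>w. w \<in> U \<Longrightarrow> pdy g differentiable (at w)"
    using g2 by (auto simp: differentiable_on_eq_differentiable_at[OF U(1)])
  have cA: "isCont (pdy (pdx g)) z" and cB: "isCont (pdx (pdy g)) z"
    using g2 U by (auto simp: continuous_on_eq_continuous_at)
  define A where "A = pdy (pdx g)"
  define B where "B = pdx (pdy g)"
  define P where "P = (\<lambda>s \<sigma>::real. z + of_real s + \<i> * of_real \<sigma>)"
  obtain r where r: "r > 0" "ball z r \<subseteq> U" using U open_contains_ball by blast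
  have key: "\<exists>w1 w2. dist w1 z \<le> 2 * t \<and> dist w2 z \<le> 2 * t \<and> A w1 = B w2"
    if t: "0 < t" "2 * t < r" for t
  proof -
    have PU: "P s \<sigma> \<in> U" and Pd: "dist (P s \<sigma>) z \<le> 2 * t"
      if "0 \<le> s" "s \<le> t" "0 \<le> \<sigma>" "\<sigma> \<le> t" for s \<sigma>
    proof -
      have "dist (P s \<sigma>) z = norm (of_real s + \<i> * of_real \<sigma>)"
        by (simp add: P_def dist_norm)
      also have "\<dots> \<le> norm (of_real s :: complex) + norm (\<i> * of_real \<sigma>)"
        by (rule norm_triangle_ineq)
      also have "\<dots> \<le> 2 * t" using that by (simp add: norm_mult)
      finally show "dist (P s \<sigma>) z \<le> 2 * t" .
      then show "P s \<sigma> \<in> U" using r t by (auto simp: dist_commute)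
    qed
    have PU': "z + of_real s \<in> U" "z + \<i> * of_real s \<in> U" if "0 \<le> s" "s \<le> t" for s
      using PU[of s 0] PU[of 0 s] that t by (auto simp: P_def)
    have der1: "DERIV (\<lambda>s. g (P s t) - g (P s 0)) x :> pdx g (P x t) - pdx g (P x 0)"
      if "0 \<le> x" "x \<le> t" for x
      unfolding P_def by (intro DERIV_diff line_x' dg; use PU[unfolded P_def] PU' t that in auto)
    obtain s1 where s1: "0 < s1" "s1 < t"
      "(g (P t t) - g (P t 0)) - (g (P 0 t) - g (P 0 0)) = (t - 0) * (pdx g (P s1 t) - pdx g (P s1 0))"
      using MVT2[OF t(1) der1] by blast
    have der2: "DERIV (\<lambda>\<sigma>. pdx g (P s1 \<sigma>)) x :> A (P s1 x)"
      if "0 \<le> x" "x \<le> t" for x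
      unfolding P_def A_def by (intro line_y' dgx; use PU[unfolded P_def] PU' t s1 that in auto)
    obtain \<sigma>1 where \<sigma>1: "0 < \<sigma>1" "\<sigma>1 < t" "pdx g (P s1 t) - pdx g (P s1 0) = (t - 0) * A (P s1 \<sigma>1)"
      using MVT2[OF t(1) der2] by blast
    have der3: "DERIV (\<lambda>\<sigma>. g (P t \<sigma>) - g (P 0 \<sigma>)) x :> pdy g (P t x) - pdy g (P 0 x)"
      if "0 \<le> x" "x \<le> t" for x
      unfolding P_def by (intro DERIV_diff line_y' dg; use PU[unfolded P_def] PU' t that in auto)
    obtain \<sigma>2 where \<sigma>2: "0 < \<sigma>2" "\<sigma>2 < t"
      "(g (P t t) - g (P 0 t)) - (g (P t 0) - g (P 0 0)) = (t - 0) * (pdy g (P t \<sigma>2) - pdy g (P 0 \<sigma>2))"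
      using MVT2[OF t(1) der3] by blast
    have der4: "DERIV (\<lambda>s. pdy g (P s \<sigma>2)) x :> B (P x \<sigma>2)"
      if "0 \<le> x" "x \<le> t" for x
      unfolding P_def B_def by (intro line_x' dgy; use PU[unfolded P_def] PU' t \<sigma>2 that in auto)
    obtain s2 where s2: "0 < s2" "s2 < t" "pdy g (P t \<sigma>2) - pdy g (P 0 \<sigma>2) = (t - 0) * B (P s2 \<sigma>2)"
      using MVT2[OF t(1) der4] by blast
    have "t * (t * A (P s1 \<sigma>1)) = t * (t * B (P s2 \<sigma>2))"
      using s1(3) \<sigma>1(3) \<sigma>2(3) s2(3) by (simp add: algebra_simps)
    then have "A (P s1 \<sigma>1) = B (P s2 \<sigma>2)" using t by simp
    then show ?thesis
      using Pd[of s1 \<sigma>1] Pd[of s2 \<sigma>2] s1 \<sigma>1 s2 \<sigma>2 by (intro exI[of _ "P s1 \<sigma>1"] exI[of _ "P s2 \<sigma>2"]) auto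
  qed
  show ?thesis
  proof (rule ccontr)
    assume ne: "pdy (pdx g) z \<noteq> pdx (pdy g) z"
    define \<epsilon> where "\<epsilon> = \<bar>A z - B z\<bar> / 2"
    have \<epsilon>: "\<epsilon> > 0" using ne by (simp add: \<epsilon>_def A_def B_def)
    obtain d1 where d1: "d1 > 0" "\<And>w. dist w z < d1 \<Longrightarrow> dist (A w) (A z) < \<epsilon>"
      using cA \<epsilon> unfolding A_def continuous_at_eps_delta by blast
    obtain d2 where d2: "d2 > 0" "\<And>w. dist w z < d2 \<Longrightarrow> dist (B w) (B z) < \<epsilon>"
      using cB \<epsilon> unfolding B_def continuous_at_eps_delta by blast
    define t where "t = min r (min d1 d2) / 4"
    have t: "0 < t" "2 * t < r" using r d1 d2 by (auto simp: t_def)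
    obtain w1 w2 where w: "dist w1 z \<le> 2 * t" "dist w2 z \<le> 2 * t" "A w1 = B w2"
      using key[OF t] by blast
    have "dist (A w1) (A z) < \<epsilon>" using w d1 d2 r by (intro d1(2)) (auto simp: t_def)
    moreover have "dist (B w2) (B z) < \<epsilon>" using w d1 d2 r by (intro d2(2)) (auto simp: t_def)
    ultimately have "\<bar>A w1 - A z\<bar> < \<bar>A z - B z\<bar> / 2" "\<bar>B w2 - B z\<bar> < \<bar>A z - B z\<bar> / 2"
      using w(3) by (simp_all add: \<epsilon>_def dist_real_def)
    moreover have "\<bar>A z - B z\<bar> \<le> \<bar>A w1 - A z\<bar> + \<bar>B w2 - B z\<bar>"
    proof -
      have "A z - B z = (A z - A w1) + (B w2 - B z)" using w(3) by simp
      then have "\<bar>A z - B z\<bar> \<le> \<bar>A z - A w1\<bar> + \<bar>B w2 - B z\<bar>" by (metis abs_triangle_ineq)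
      then show ?thesis by (simp add: abs_minus_commute)
    qed
    ultimately show False by (rule abs_contra)
  qed
qed

lemma schwarz:
  fixes G :: "complex \<Rightarrow> 'a::euclidean_space"
  assumes U: "open U" "z \<in> U" and G: "Ck 2 U G"
  shows "pdy (pdx G) z = pdx (pdy G) z"
proof (rule euclidean_eqI)
  fix b :: 'a assume b: "b \<in> Basis"
  have G2: "Ck (Suc (Suc 0)) U G" using G by (simp add: numeral_2_eq_2)
  have dG: "\<And>w. w \<in> U \<Longrightarrow> G differentiable (at w)"
    and dGx: "\<And>w. w \<in> U \<Longrightarrow> pdx G differentiable (at w)"
    and dGy: "\<And>w. w \<in> U \<Longrightarrow> pdy G differentiable (at w)"
    using G2 by (auto simp: differentiable_on_eq_differentiable_at[OF U(1)])
  have bl: "bounded_linear (\<lambda>x::'a. x \<bullet> b)" by (rule bounded_linear_inner_left)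
  define g where "g = (\<lambda>w. G w \<bullet> b)"
  have g2: "Ck 2 U g" unfolding g_def by (rule Ck_linear[OF U(1) bl G])
  have gx: "pdx g w = pdx G w \<bullet> b" if "w \<in> U" for w
    unfolding g_def by (rule pdx_linear[OF bl dG[OF that]])
  have gy: "pdy g w = pdy G w \<bullet> b" if "w \<in> U" for w
    unfolding g_def by (rule pdy_linear[OF bl dG[OF that]])
  have "pdy (pdx g) z = pdy (\<lambda>w. pdx G w \<bullet> b) z"
    by (rule pdy_local[OF U]) (simp add: gx)
  also have "\<dots> = pdy (pdx G) z \<bullet> b" by (rule pdy_linear[OF bl dGx[OF U(2)]])
  finally have 1: "pdy (pdx g) z = pdy (pdx G) z \<bullet> b" .
  have "pdx (pdy g) z = pdx (\<lambda>w. pdy G w \<bullet> b) z"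
    by (rule pdx_local[OF U]) (simp add: gy)
  also have "\<dots> = pdx (pdy G) z \<bullet> b" by (rule pdx_linear[OF bl dGy[OF U(2)]])
  finally have 2: "pdx (pdy g) z = pdx (pdy G) z \<bullet> b" .
  show "pdy (pdx G) z \<bullet> b = pdx (pdy G) z \<bullet> b"
    using schwarz_real[OF U g2] 1 2 by simp
qed

lemma exhaust_5:
  fixes x :: 5
  shows "x = 1 \<or> x = 2 \<or> x = 3 \<or> x = 4 \<or> x = 5"
proof (induct x)
  case (of_int z)
  then have "z = 0 \<or> z = 1 \<or> z = 2 \<or> z = 3 \<or> z = 4" by fastforce
  then show ?case by auto
qed

lemma lorC_sym: "lorC x y = lorC y x"
  unfolding lorC_def by (simp add: mult.commute mult.left_commute)

lemma lorC_add_left: "lorC (x + y) z = lorC x z + lorC y z"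
  unfolding lorC_def by (simp add: algebra_simps sum.distrib)
lemma lorC_add_right: "lorC z (x + y) = lorC z x + lorC z y"
  unfolding lorC_def by (simp add: algebra_simps sum.distrib)
lemma lorC_diff_left: "lorC (x - y) z = lorC x z - lorC y z"
  unfolding lorC_def by (simp add: algebra_simps sum_subtractf)
lemma lorC_diff_right: "lorC z (x - y) = lorC z x - lorC z y"
  unfolding lorC_def by (simp add: algebra_simps sum_subtractf)
lemma lorC_smult_left: "lorC (c *s x) z = c * lorC x z"
  unfolding lorC_def by (simp add: algebra_simps sum_distrib_left)
lemma lorC_smult_right: "lorC z (c *s x) = c * lorC z x"
  unfolding lorC_def by (simp add: algebra_simps sum_distrib_left)
lemma lorC_scaleR_left: "lorC (r *\<^sub>R x) z = r *\<^sub>R lorC x z"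
  unfolding lorC_def by (simp add: scaleR_sum_right algebra_simps)
lemma lorC_scaleR_right: "lorC z (r *\<^sub>R x) = r *\<^sub>R lorC z x"
  unfolding lorC_def by (simp add: scaleR_sum_right algebra_simps)
lemma lorC_zero[simp]: "lorC 0 z = 0" "lorC z 0 = 0"
  unfolding lorC_def by simp_all
lemma lorC_minus_left: "lorC (- x) z = - lorC x z"
  unfolding lorC_def by (simp add: sum_negf)
lemma lorC_minus_right: "lorC z (- x) = - lorC z x"
  unfolding lorC_def by (simp add: sum_negf)

lemmas lorC_simps = lorC_add_left lorC_add_right lorC_diff_left lorC_diff_right
  lorC_smult_left lorC_smult_right lorC_scaleR_left lorC_scaleR_right lorC_minus_left lorC_minus_right

lemma lorC_cvec: "lorC (cvec x) (cvec y) = complex_of_real (lor x y)"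
  unfolding lorC_def lor_def cvec_def by (simp, rule sum.cong) auto

lemma lor_sym: "lor x y = lor y x"
  unfolding lor_def by (simp add: mult.commute mult.left_commute)
lemma lor_add_left: "lor (x + y) z = lor x z + lor y z"
  unfolding lor_def by (simp add: algebra_simps sum.distrib)
lemma lor_add_right: "lor z (x + y) = lor z x + lor z y"
  unfolding lor_def by (simp add: algebra_simps sum.distrib)
lemma lor_diff_left: "lor (x - y) z = lor x z - lor y z"
  unfolding lor_def by (simp add: algebra_simps sum_subtractf)
lemma lor_diff_right: "lor z (x - y) = lor z x - lor z y"
  unfolding lor_def by (simp add: algebra_simps sum_subtractf)
lemma lor_scaleR_left: "lor (r *\<^sub>R x) z = r * lor x z"
  unfolding lor_def by (simp add: algebra_simps sum_distrib_left)
lemma lor_scaleR_right: "lor z (r *\<^sub>R x) = r * lor z x"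
  unfolding lor_def by (simp add: algebra_simps sum_distrib_left)
lemma lor_zero[simp]: "lor 0 z = 0" "lor z 0 = 0"
  unfolding lor_def by simp_all
lemmas lor_simps = lor_add_left lor_add_right lor_diff_left lor_diff_right
  lor_scaleR_left lor_scaleR_right

lemma cvec_add: "cvec (x + y) = cvec x + cvec y"
  unfolding cvec_def by (simp add: vec_eq_iff)
lemma cvec_diff: "cvec (x - y) = cvec x - cvec y"
  unfolding cvec_def by (simp add: vec_eq_iff)
lemma cvec_scaleR: "cvec (r *\<^sub>R x) = r *\<^sub>R cvec x"
  unfolding cvec_def by (simp add: vec_eq_iff) (simp add: scaleR_conv_of_real)
lemma cvec_zero[simp]: "cvec 0 = 0"
  unfolding cvec_def by (simp add: vec_eq_iff)

lemma bl_cvec: "bounded_linear cvec"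
  unfolding linear_conv_bounded_linear[symmetric]
  by (rule linearI) (simp_all add: cvec_add cvec_scaleR)

lemma bl_smult: "bounded_linear (\<lambda>v::complex^5. c *s v)"
  unfolding linear_conv_bounded_linear[symmetric]
  by (rule linearI; simp add: vec_eq_iff distrib_left)

lemma bb_lorC: "bounded_bilinear lorC"
  unfolding bilinear_conv_bounded_bilinear[symmetric] bilinear_def
  by (auto intro!: linearI simp: lorC_simps)

lemma bb_lor: "bounded_bilinear lor"
  unfolding bilinear_conv_bounded_bilinear[symmetric] bilinear_def
  by (auto intro!: linearI simp: lor_simps)

lemma bb_smult: "bounded_bilinear (\<lambda>(c::complex) (v::complex^5). c *s v)"
  unfolding bilinear_conv_bounded_bilinear[symmetric] bilinear_def
  by (auto intro!: linearI simp: vec_eq_iff distrib_left distrib_right)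

lemma parseval5:
  fixes e1 e2 e3 e4 e5 v w :: "complex^5"
  assumes o12: "lorC e1 e2 = 0" and o13: "lorC e1 e3 = 0" and o14: "lorC e1 e4 = 0" and o15: "lorC e1 e5 = 0"
    and o23: "lorC e2 e3 = 0" and o24: "lorC e2 e4 = 0" and o25: "lorC e2 e5 = 0"
    and o34: "lorC e3 e4 = 0" and o35: "lorC e3 e5 = 0" and o45: "lorC e4 e5 = 0"
    and n1: "lorC e1 e1 \<noteq> 0" and n2: "lorC e2 e2 \<noteq> 0" and n3: "lorC e3 e3 \<noteq> 0"
    and n4: "lorC e4 e4 \<noteq> 0" and n5: "lorC e5 e5 \<noteq> 0"
  shows "lorC v w = lorC v e1 * lorC w e1 / lorC e1 e1 + lorC v e2 * lorC w e2 / lorC e2 e2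
     + lorC v e3 * lorC w e3 / lorC e3 e3 + lorC v e4 * lorC w e4 / lorC e4 e4
     + lorC v e5 * lorC w e5 / lorC e5 e5"
proof -
  define T where "T = (\<lambda>c::complex^5. c$1 *s e1 + c$2 *s e2 + c$3 *s e3 + c$4 *s e4 + c$5 *s e5)"
  have o: "lorC e2 e1 = 0" "lorC e3 e1 = 0" "lorC e4 e1 = 0" "lorC e5 e1 = 0"
    "lorC e3 e2 = 0" "lorC e4 e2 = 0" "lorC e5 e2 = 0" "lorC e4 e3 = 0" "lorC e5 e3 = 0" "lorC e5 e4 = 0"
    using assms lorC_sym by metis+
  have c1: "lorC (T c) e1 = c$1 * lorC e1 e1" for c
    by (simp add: T_def lorC_simps o assms)
  have c2: "lorC (T c) e2 = c$2 * lorC e2 e2" for c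
    by (simp add: T_def lorC_simps o assms)
  have c3: "lorC (T c) e3 = c$3 * lorC e3 e3" for c
    by (simp add: T_def lorC_simps o assms)
  have c4: "lorC (T c) e4 = c$4 * lorC e4 e4" for c
    by (simp add: T_def lorC_simps o assms)
  have c5: "lorC (T c) e5 = c$5 * lorC e5 e5" for c
    by (simp add: T_def lorC_simps o assms)
  have lin: "linear T"
    by (rule linearI) (simp_all add: T_def vec_eq_iff algebra_simps)
  have inj: "inj T"
  proof (rule injI)
    fix c d assume "T c = T d"
    then have "c$1 = d$1" "c$2 = d$2" "c$3 = d$3" "c$4 = d$4" "c$5 = d$5"
      using c1[of c] c1[of d] c2[of c] c2[of d] c3[of c] c3[of d] c4[of c] c4[of d] c5[of c] c5[of d]
        n1 n2 n3 n4 n5 by auto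
    then show "c = d" unfolding vec_eq_iff using exhaust_5 by metis
  qed
  have "surj T" using linear_injective_imp_surjective[OF lin inj] by simp
  then obtain c where v: "v = T c" by (metis surjD)
  have "lorC v w = c$1 * lorC e1 w + c$2 * lorC e2 w + c$3 * lorC e3 w + c$4 * lorC e4 w + c$5 * lorC e5 w"
    by (simp add: v T_def lorC_simps)
  also have "\<dots> = lorC v e1 * lorC w e1 / lorC e1 e1 + lorC v e2 * lorC w e2 / lorC e2 e2
     + lorC v e3 * lorC w e3 / lorC e3 e3 + lorC v e4 * lorC w e4 / lorC e4 e4
     + lorC v e5 * lorC w e5 / lorC e5 e5"
    using n1 n2 n3 n4 n5 by (simp add: v c1 c2 c3 c4 c5 lorC_sym[of w])
  finally show ?thesis .
qed

definition Dzb :: "(complex \<Rightarrow> complex^5) \<Rightarrow> complex \<Rightarrow> complex^5" where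
  "Dzb G z = (\<chi> i. (pdx G z $ i + \<i> * pdy G z $ i) / 2)"
definition dz :: "(complex \<Rightarrow> complex) \<Rightarrow> complex \<Rightarrow> complex" where
  "dz g z = (pdx g z - \<i> * pdy g z) / 2"
definition dzb :: "(complex \<Rightarrow> complex) \<Rightarrow> complex \<Rightarrow> complex" where
  "dzb g z = (pdx g z + \<i> * pdy g z) / 2"

lemma Dz_eq: "Dz G z = (1/2) *s pdx G z + (- \<i>/2) *s pdy G z"
  unfolding Dz_def by (simp add: vec_eq_iff field_simps)
lemma Dzb_eq: "Dzb G z = (1/2) *s pdx G z + (\<i>/2) *s pdy G z"
  unfolding Dzb_def by (simp add: vec_eq_iff field_simps)

lemma diff_linear:
  "bounded_linear L \<Longrightarrow> A differentiable (at z) \<Longrightarrow> (\<lambda>w. L (A w)) differentiable (at z)"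
  using bounded_linear.has_derivative has_derivative_pd unfolding differentiable_def by blast

lemma diff_bilinear:
  "bounded_bilinear B \<Longrightarrow> A differentiable (at z) \<Longrightarrow> C differentiable (at z) \<Longrightarrow>
   (\<lambda>w. B (A w) (C w)) differentiable (at z)"
  using bounded_bilinear.FDERIV has_derivative_pd unfolding differentiable_def by blast

lemma pdx_diff:
  assumes "A differentiable (at z)" "C differentiable (at z)"
  shows "pdx (\<lambda>w. A w - C w) z = pdx A z - pdx C z"
  by (simp add: pdx_has[OF has_derivative_diff[OF has_derivative_pd[OF assms(1)] has_derivative_pd[OF assms(2)]]])
lemma pdy_diff:
  assumes "A differentiable (at z)" "C differentiable (at z)"
  shows "pdy (\<lambda>w. A w - C w) z = pdy A z - pdy C z"
  by (simp add: pdy_has[OF has_derivative_diff[OF has_derivative_pd[OF assms(1)] has_derivative_pd[OF assms(2)]]])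

lemma dz_lorC:
  assumes "A differentiable (at z)" "B differentiable (at z)"
  shows "dz (\<lambda>w. lorC (A w) (B w)) z = lorC (Dz A z) (B z) + lorC (A z) (Dz B z)"
  unfolding dz_def pdx_bilinear[OF bb_lorC assms] pdy_bilinear[OF bb_lorC assms] Dz_eq
  by (simp add: lorC_simps field_simps)

lemma dzb_lorC:
  assumes "A differentiable (at z)" "B differentiable (at z)"
  shows "dzb (\<lambda>w. lorC (A w) (B w)) z = lorC (Dzb A z) (B z) + lorC (A z) (Dzb B z)"
  unfolding dzb_def pdx_bilinear[OF bb_lorC assms] pdy_bilinear[OF bb_lorC assms] Dzb_eq
  by (simp add: lorC_simps field_simps)

lemma Dz_smult:
  assumes "c differentiable (at z)" "A differentiable (at z)"
  shows "Dz (\<lambda>w. c w *s A w) z = dz c z *s A z + c z *s Dz A z"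
  using pdx_bilinear[OF bb_smult assms] pdy_bilinear[OF bb_smult assms]
  unfolding Dz_def dz_def by (simp add: vec_eq_iff field_simps)

lemma Dz_diff:
  assumes "A differentiable (at z)" "B differentiable (at z)"
  shows "Dz (\<lambda>w. A w - B w) z = Dz A z - Dz B z"
  unfolding Dz_def pdx_diff[OF assms] pdy_diff[OF assms] by (simp add: vec_eq_iff field_simps)

lemma Dz_cvec:
  assumes "g differentiable (at z)"
  shows "Dz (\<lambda>w. cvec (g w)) z = (1/2) *s cvec (pdx g z) + (- \<i>/2) *s cvec (pdy g z)"
  unfolding Dz_eq pdx_linear[OF bl_cvec assms] pdy_linear[OF bl_cvec assms] ..
lemma Dzb_cvec:
  assumes "g differentiable (at z)"
  shows "Dzb (\<lambda>w. cvec (g w)) z = (1/2) *s cvec (pdx g z) + (\<i>/2) *s cvec (pdy g z)"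
  unfolding Dzb_eq pdx_linear[OF bl_cvec assms] pdy_linear[OF bl_cvec assms] ..

lemma dz_ofreal:
  fixes e :: "complex \<Rightarrow> real"
  assumes "e differentiable (at z)"
  shows "dz (\<lambda>w. complex_of_real (e w)) z = (of_real (pdx e z) - \<i> * of_real (pdy e z)) / 2"
  unfolding dz_def pdx_linear[OF bounded_linear_of_real assms] pdy_linear[OF bounded_linear_of_real assms] ..

lemma Dz_fun: "Dz G = (\<lambda>w. (1/2) *s pdx G w + (- \<i>/2) *s pdy G w)"
  by (rule ext) (rule Dz_eq)
lemma Dzb_fun: "Dzb G = (\<lambda>w. (1/2) *s pdx G w + (\<i>/2) *s pdy G w)"
  by (rule ext) (rule Dzb_eq)

lemma pdx_comb:
  fixes A B :: "complex \<Rightarrow> complex^5"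
  assumes "A differentiable (at z)" "B differentiable (at z)"
  shows "pdx (\<lambda>w. a *s A w + b *s B w) z = a *s pdx A z + b *s pdx B z"
proof -
  have d1: "(\<lambda>w. a *s A w) differentiable (at z)" by (rule diff_linear[OF bl_smult assms(1)])
  have d2: "(\<lambda>w. b *s B w) differentiable (at z)" by (rule diff_linear[OF bl_smult assms(2)])
  show ?thesis by (simp add: pdx_add[OF d1 d2] pdx_linear[OF bl_smult assms(1)] pdx_linear[OF bl_smult assms(2)])
qed
lemma pdy_comb:
  fixes A B :: "complex \<Rightarrow> complex^5"
  assumes "A differentiable (at z)" "B differentiable (at z)"
  shows "pdy (\<lambda>w. a *s A w + b *s B w) z = a *s pdy A z + b *s pdy B z"
proof -
  have d1: "(\<lambda>w. a *s A w) differentiable (at z)" by (rule diff_linear[OF bl_smult assms(1)])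
  have d2: "(\<lambda>w. b *s B w) differentiable (at z)" by (rule diff_linear[OF bl_smult assms(2)])
  show ?thesis by (simp add: pdy_add[OF d1 d2] pdy_linear[OF bl_smult assms(1)] pdy_linear[OF bl_smult assms(2)])
qed

lemma Dzb_Dz:
  assumes "pdx G differentiable (at z)" "pdy G differentiable (at z)"
    and "pdy (pdx G) z = pdx (pdy G) z"
  shows "Dzb (Dz G) z = (1/4) *s (pdx (pdx G) z + pdy (pdy G) z)"
  unfolding Dzb_eq Dz_fun pdx_comb[OF assms(1,2)] pdy_comb[OF assms(1,2)] assms(3)
  by (simp add: vec_eq_iff field_simps)

lemma Dz_Dzb:
  assumes "pdx G differentiable (at z)" "pdy G differentiable (at z)"
    and "pdy (pdx G) z = pdx (pdy G) z"
  shows "Dz (Dzb G) z = (1/4) *s (pdx (pdx G) z + pdy (pdy G) z)"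
  unfolding Dz_eq Dzb_fun pdx_comb[OF assms(1,2)] pdy_comb[OF assms(1,2)] assms(3)
  by (simp add: vec_eq_iff field_simps)

lemma holo_iff:
  fixes g :: "complex \<Rightarrow> complex"
  assumes U: "open U" and d: "\<And>z. z \<in> U \<Longrightarrow> g differentiable (at z)"
  shows "g holomorphic_on U \<longleftrightarrow> (\<forall>z\<in>U. dzb g z = 0)"
  unfolding holomorphic_on_open[OF U]
proof (intro ball_cong refl iffI)
  fix z assume z: "z \<in> U"
  {
    assume "\<exists>f'. DERIV g z :> f'"
    then obtain c where "(g has_derivative (\<lambda>h. c * h)) (at z)"
      unfolding has_field_derivative_def by blast
    from pdx_has[OF this] pdy_has[OF this] show "dzb g z = 0"
      by (simp add: dzb_def) (metis mult.assoc mult.commute complex_i_mult_minus add.right_inverse mult_minus_right mult_1_right)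
  }
  {
    assume 0: "dzb g z = 0"
    then have q: "pdy g z = \<i> * pdx g z"
      unfolding dzb_def by (simp add: field_simps) (metis complex_i_mult_minus mult.left_commute mult_minus_right neg_equal_iff_equal add.commute add_eq_0_iff mult.assoc mult.commute)
    have "(g has_derivative (\<lambda>h. pdx g z * h)) (at z)"
    proof (rule has_derivative_eq_rhs[OF has_derivative_pd[OF d[OF z]]])
      show "(\<lambda>h. Re h *\<^sub>R pdx g z + Im h *\<^sub>R pdy g z) = (\<lambda>h. pdx g z * h)"
      proof
        fix h :: complex
        have "pdx g z * h = pdx g z * (of_real (Re h) + \<i> * of_real (Im h))"
          by (simp only: complex_eq[symmetric])
        then show "Re h *\<^sub>R pdx g z + Im h *\<^sub>R pdy g z = pdx g z * h"
          by (simp add: q scaleR_conv_of_real algebra_simps)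
      qed
    qed
    then show "\<exists>f'. DERIV g z :> f'" unfolding has_field_derivative_def by blast
  }
qed

lemma dz_local:
  assumes "open U" "z \<in> U" "\<And>w. w \<in> U \<Longrightarrow> g w = g' w"
  shows "dz g z = dz g' z" "dzb g z = dzb g' z"
  using pdx_local[OF assms] pdy_local[OF assms] by (simp_all add: dz_def dzb_def)

lemma Dz_local:
  assumes "open U" "z \<in> U" "\<And>w. w \<in> U \<Longrightarrow> G w = G' w"
  shows "Dz G z = Dz G' z" "Dzb G z = Dzb G' z"
  using pdx_local[OF assms] pdy_local[OF assms] by (simp_all add: Dz_def Dzb_def)

lemma dz_const_on:
  assumes "open U" "z \<in> U" "\<And>w. w \<in> U \<Longrightarrow> g w = c"
  shows "dz g z = 0" "dzb g z = 0"
  using dz_local[OF assms] by (simp_all add: dz_def dzb_def pdx_const pdy_const)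

lemma smooth_Ck: "smooth_on U G \<Longrightarrow> Ck n U G"
  by (simp add: smooth_on_def)

lemma smooth_pdx: "smooth_on U G \<Longrightarrow> smooth_on U (pdx G)"
  unfolding smooth_on_def by (metis Ck.simps(2))
lemma smooth_pdy: "smooth_on U G \<Longrightarrow> smooth_on U (pdy G)"
  unfolding smooth_on_def by (metis Ck.simps(2))

lemma smooth_diffat: "open U \<Longrightarrow> smooth_on U G \<Longrightarrow> z \<in> U \<Longrightarrow> G differentiable (at z)"
  unfolding smooth_on_def using Ck_diff_at by blast

lemma smooth_add: "open U \<Longrightarrow> smooth_on U A \<Longrightarrow> smooth_on U C \<Longrightarrow> smooth_on U (\<lambda>w. A w + C w)"
  unfolding smooth_on_def using Ck_add by blast
lemma smooth_linear: "open U \<Longrightarrow> bounded_linear L \<Longrightarrow> smooth_on U A \<Longrightarrow> smooth_on U (\<lambda>w. L (A w))"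
  unfolding smooth_on_def using Ck_linear by blast
lemma smooth_bilinear: "open U \<Longrightarrow> bounded_bilinear B \<Longrightarrow> smooth_on U A \<Longrightarrow> smooth_on U C \<Longrightarrow>
    smooth_on U (\<lambda>w. B (A w) (C w))"
  unfolding smooth_on_def using Ck_bilinear by blast
lemma smooth_cong: "open U \<Longrightarrow> (\<And>w. w \<in> U \<Longrightarrow> g w = g' w) \<Longrightarrow> smooth_on U g \<Longrightarrow> smooth_on U g'"
  unfolding smooth_on_def using Ck_cong by blast
lemma smooth_inverse: "open U \<Longrightarrow> (\<And>w. w \<in> U \<Longrightarrow> (g::complex\<Rightarrow>real) w \<noteq> 0) \<Longrightarrow> smooth_on U g \<Longrightarrow>
    smooth_on U (\<lambda>w. inverse (g w))"
  unfolding smooth_on_def using Ck_inverse by blast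

lemma smooth_Dz: "open U \<Longrightarrow> smooth_on U G \<Longrightarrow> smooth_on U (Dz G)"
  unfolding Dz_fun
  by (intro smooth_add smooth_linear[OF _ bl_smult] smooth_pdx smooth_pdy)
lemma smooth_Dzb: "open U \<Longrightarrow> smooth_on U G \<Longrightarrow> smooth_on U (Dzb G)"
  unfolding Dzb_fun
  by (intro smooth_add smooth_linear[OF _ bl_smult] smooth_pdx smooth_pdy)

lemma Dz_comm:
  assumes "open U" "smooth_on U G" "z \<in> U"
  shows "Dzb (Dz G) z = Dz (Dzb G) z" "Dzb (Dz G) z = (1/4) *s (pdx (pdx G) z + pdy (pdy G) z)"
proof -
  have s: "pdy (pdx G) z = pdx (pdy G) z" by (rule schwarz[OF assms(1,3) smooth_Ck[OF assms(2)]])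
  have d: "pdx G differentiable (at z)" "pdy G differentiable (at z)"
    using smooth_diffat[OF assms(1) smooth_pdx[OF assms(2)] assms(3)]
      smooth_diffat[OF assms(1) smooth_pdy[OF assms(2)] assms(3)] .
  show "Dzb (Dz G) z = Dz (Dzb G) z" "Dzb (Dz G) z = (1/4) *s (pdx (pdx G) z + pdy (pdy G) z)"
    using Dzb_Dz[OF d s] Dz_Dzb[OF d s] by simp_all
qed

lemma lorC_comb:
  "lorC (\<alpha> *s cvec a + \<beta> *s cvec b) (\<gamma> *s cvec c + \<delta> *s cvec d) =
   \<alpha> * \<gamma> * of_real (lor a c) + \<alpha> * \<delta> * of_real (lor a d) + \<beta> * \<gamma> * of_real (lor b c) + \<beta> * \<delta> * of_real (lor b d)"
  by (simp add: lorC_simps lorC_cvec algebra_simps)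

lemma cvec_scaleR': "cvec (r *\<^sub>R x) = complex_of_real r *s cvec x"
  unfolding cvec_def by (simp add: vec_eq_iff)

lemma lorC_cvec_comb:
  "lorC (cvec c) (\<gamma> *s cvec a + \<delta> *s cvec b) = \<gamma> * of_real (lor c a) + \<delta> * of_real (lor c b)"
  by (simp add: lorC_simps lorC_cvec)

lemma alg_Q:
  fixes lam E dzE X2 X3 A2 A3 a1 a2 p1 p2 \<delta> PV Qzb :: complex
  assumes "lam \<noteq> 0" "E = lam / 2" "X2 = dzE" "X3 = - \<i> * dzE" "A2 / 2 - \<i> * A3 / 2 = - \<delta>"
    "a2 = - a1" "PV = A2 * X2 / lam + A3 * X3 / lam + a1 * p1 - a2 * p2"
    "Qzb = 2 * (dzE * \<delta> + E * PV)"
  shows "Qzb = lam * a1 * (p1 + p2)"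
proof -
  have "A2 * X2 + A3 * X3 = - 2 * \<delta> * dzE"
    using assms(3,4,5) by (simp add: algebra_simps) (metis (no_types, lifting) mult.assoc mult_2 add_diff_eq diff_add_cancel left_diff_distrib mult.commute ring_class.ring_distribs(1) times_divide_eq_right)
  then have PV: "PV = - 2 * \<delta> * dzE / lam + a1 * (p1 + p2)"
    using assms(6,7) by (simp add: add_divide_distrib[symmetric] algebra_simps)
  have l: "lam = 2 * E" using assms(2) by (simp add: field_simps)
  have E0: "E \<noteq> 0" using assms(1) l by auto
  show ?thesis unfolding assms(8) PV l using E0 by (simp add: field_simps)
qed

lemma alg_d:
  fixes lam dzE X2 X3 B2 B3 b1 b2 p1 p2 PV :: complex
  assumes "X2 = dzE" "X3 = - \<i> * dzE" "B2 / 2 - \<i> * B3 / 2 = 0" "b2 = - b1"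
    "PV = X2 * B2 / lam + X3 * B3 / lam + p1 * b1 - p2 * b2"
  shows "PV = b1 * (p1 + p2)"
proof -
  have "X2 * B2 + X3 * B3 = dzE * (B2 - \<i> * B3)" using assms(1,2) by (simp add: algebra_simps)
  also have "B2 - \<i> * B3 = 0" using assms(3) by (simp add: field_simps)
  finally have "X2 * B2 + X3 * B3 = 0" by simp
  then show ?thesis using assms(4,5) by (simp add: add_divide_distrib[symmetric] algebra_simps)
qed

lemma alg_q:
  fixes lam dzE X1 X2 X3 p1 p2 Q :: complex
  assumes "X2 = dzE" "X3 = - \<i> * dzE" "X1 = 0"
    "Q = X1 * X1 / 1 + X2 * X2 / lam + X3 * X3 / lam + p1 * p1 / 1 + p2 * p2 / (-1)"
  shows "Q = (p1 - p2) * (p1 + p2)"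
proof -
  have "X2 * X2 + X3 * X3 = 0" using assms(1,2) by (simp add: algebra_simps)
  then show ?thesis using assms(3,4) by (simp add: add_divide_distrib[symmetric] algebra_simps)
qed

theorem mainTheorem8:
  fixes U :: "complex set"
    and f N1 N2 :: "complex \<Rightarrow> real^5"
    and h :: "complex \<Rightarrow> real"
  assumes U_open: "open U"
    and f_smooth: "smooth_on U f" and N1_smooth: "smooth_on U N1" and N2_smooth: "smooth_on U N2"
    and in_deSitter: "\<forall>z\<in>U. lor (f z) (f z) = 1"
    and conformal: "\<forall>z\<in>U. lor (pdx f z) (pdx f z) = lor (pdy f z) (pdy f z)
                          \<and> lor (pdx f z) (pdy f z) = 0"
    and spacelike_immersion: "\<forall>z\<in>U. lor (pdx f z) (pdx f z) > 0"
    and N_normal: "\<forall>z\<in>U. \<forall>N\<in>{N1 z, N2 z}.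
                      lor N (f z) = 0 \<and> lor N (pdx f z) = 0 \<and> lor N (pdy f z) = 0"
    and N_orthonormal: "\<forall>z\<in>U. lor (N1 z) (N1 z) = 1 \<and> lor (N2 z) (N2 z) = -1
                          \<and> lor (N1 z) (N2 z) = 0"
    and N2_future: "\<forall>z\<in>U. lor (N2 z) (axis 4 1) < 0"
    and marginally_trapped: "\<forall>z\<in>U. meanH f z = h z *\<^sub>R (N1 z + N2 z)"
    and H_nonzero: "\<forall>z\<in>U. h z \<noteq> 0"
    and non_isotropic: "\<forall>z\<in>U. lorC (Dz (Dz (cvec \<circ> f)) z) (Dz (Dz (cvec \<circ> f)) z) \<noteq> 0"
  shows "((\<lambda>z. lorC (Dz (Dz (cvec \<circ> f)) z) (Dz (Dz (cvec \<circ> f)) z)) holomorphic_on U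
          \<longleftrightarrow> (\<lambda>z. complex_of_real (h z) *
                    (lorC (Dz (Dz (cvec \<circ> f)) z) (cvec (N1 z))
                     - (- lorC (Dz (Dz (cvec \<circ> f)) z) (cvec (N2 z))))) holomorphic_on U)
       \<and> ((\<lambda>z. complex_of_real (h z) *
                    (lorC (Dz (Dz (cvec \<circ> f)) z) (cvec (N1 z))
                     - (- lorC (Dz (Dz (cvec \<circ> f)) z) (cvec (N2 z))))) holomorphic_on U
          \<longleftrightarrow> (\<forall>z\<in>U. nabla_perp_x N1 N2 (meanH f) z = 0 \<and> nabla_perp_y N1 N2 (meanH f) z = 0))"
proof -
  define F where "F = (\<lambda>w. cvec (f w))"
  have Fc: "cvec \<circ> f = F" by (simp add: F_def fun_eq_iff)
  define e where "e = (\<lambda>w. (lor (pdx f w) (pdx f w) + lor (pdy f w) (pdy f w)) / 4)"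
  define E where "E = (\<lambda>w. complex_of_real (e w))"
  define H where "H = meanH f"
  define Hc where "Hc = (\<lambda>w. cvec (H w))"
  define \<phi> where "\<phi> = Dz (Dz F)"
  note U = U_open
  have sF: "smooth_on U F" unfolding F_def by (rule smooth_linear[OF U bl_cvec f_smooth])
  have sfx: "smooth_on U (pdx f)" and sfy: "smooth_on U (pdy f)"
    using smooth_pdx smooth_pdy f_smooth by blast+
  have se: "smooth_on U e" unfolding e_def
    by (intro smooth_linear[OF U bounded_linear_divide] smooth_add[OF U]
        smooth_bilinear[OF U bb_lor] sfx sfy)
  have epos: "e w > 0" if "w \<in> U" for w
    using spacelike_immersion conformal that by (auto simp: e_def)
  have ne: "e w \<noteq> 0" if "w \<in> U" for w using epos[OF that] by simp
  have sie: "smooth_on U (\<lambda>w. 1 / e w)"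
    by (rule smooth_cong[OF U _ smooth_inverse[OF U ne se]]) (simp add: inverse_eq_divide)
  have Heq: "H = (\<lambda>w. f w + (1 / e w) *\<^sub>R ((1/4) *\<^sub>R (pdx (pdx f) w + pdy (pdy f) w)))"
    by (simp add: H_def meanH_def e_def fun_eq_iff)
  have sH: "smooth_on U H" unfolding Heq
    by (intro smooth_add[OF U] smooth_bilinear[OF U bounded_bilinear_scaleR] sie
        smooth_linear[OF U bounded_linear_scaleR_right] f_smooth smooth_pdx smooth_pdy)
  have sHc: "smooth_on U Hc" unfolding Hc_def by (rule smooth_linear[OF U bl_cvec sH])
  have sE: "smooth_on U E" unfolding E_def by (rule smooth_linear[OF U bounded_linear_of_real se])
  have sFz: "smooth_on U (Dz F)" by (rule smooth_Dz[OF U sF])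
  have s\<phi>: "smooth_on U \<phi>" unfolding \<phi>_def by (rule smooth_Dz[OF U sFz])
  have df: "f differentiable (at w)" if "w \<in> U" for w using smooth_diffat[OF U f_smooth that] .
  have dF: "F differentiable (at w)" if "w \<in> U" for w using smooth_diffat[OF U sF that] .
  have dFz: "Dz F differentiable (at w)" if "w \<in> U" for w using smooth_diffat[OF U sFz that] .
  have d\<phi>: "\<phi> differentiable (at w)" if "w \<in> U" for w using smooth_diffat[OF U s\<phi> that] .
  have dHc: "Hc differentiable (at w)" if "w \<in> U" for w using smooth_diffat[OF U sHc that] .
  have dH: "H differentiable (at w)" if "w \<in> U" for w using smooth_diffat[OF U sH that] .
  have dE: "E differentiable (at w)" if "w \<in> U" for w using smooth_diffat[OF U sE that] .
  have de: "e differentiable (at w)" if "w \<in> U" for w using smooth_diffat[OF U se that] .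
  have dfx: "pdx f differentiable (at w)" "pdy f differentiable (at w)" if "w \<in> U" for w
    using smooth_diffat[OF U sfx that] smooth_diffat[OF U sfy that] by auto
  have Fz_eq: "Dz F w = (1/2) *s cvec (pdx f w) + (- \<i>/2) *s cvec (pdy f w)" if "w \<in> U" for w
    unfolding F_def by (rule Dz_cvec[OF df[OF that]])
  have Fzb_eq: "Dzb F w = (1/2) *s cvec (pdx f w) + (\<i>/2) *s cvec (pdy f w)" if "w \<in> U" for w
    unfolding F_def by (rule Dzb_cvec[OF df[OF that]])
  have Hz_eq: "Dz Hc w = (1/2) *s cvec (pdx H w) + (- \<i>/2) *s cvec (pdy H w)" if "w \<in> U" for w
    unfolding Hc_def by (rule Dz_cvec[OF dH[OF that]])
  have Hzb_eq: "Dzb Hc w = (1/2) *s cvec (pdx H w) + (\<i>/2) *s cvec (pdy H w)" if "w \<in> U" for w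
    unfolding Hc_def by (rule Dzb_cvec[OF dH[OF that]])
  have Hform: "H w = h w *\<^sub>R (N1 w + N2 w)" if "w \<in> U" for w
    using marginally_trapped that by (simp add: H_def)
  have U1: "lorC (F w) (F w) = 1" if "w \<in> U" for w
    using in_deSitter that by (simp add: F_def lorC_cvec)
  have U3: "lorC (Dz F w) (Dz F w) = 0" if "w \<in> U" for w
  proof -
    have c: "lor (pdx f w) (pdx f w) = lor (pdy f w) (pdy f w)" "lor (pdx f w) (pdy f w) = 0"
      "lor (pdy f w) (pdx f w) = 0" using conformal that lor_sym by metis+
    show ?thesis unfolding Fz_eq[OF that] lorC_comb c by (simp add: field_simps)
  qed
  have U4: "lorC (Dz F w) (Dzb F w) = E w" if "w \<in> U" for w
  proof -
    have c: "lor (pdx f w) (pdx f w) = lor (pdy f w) (pdy f w)" "lor (pdx f w) (pdy f w) = 0"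
      "lor (pdy f w) (pdx f w) = 0" using conformal that lor_sym by metis+
    show ?thesis unfolding Fz_eq[OF that] Fzb_eq[OF that] lorC_comb c E_def e_def
      by (simp add: field_simps)
  qed
  have U2: "lorC (F w) (Dz F w) = 0" if "w \<in> U" for w
  proof -
    have "dz (\<lambda>w. lorC (F w) (F w)) w = 0" by (rule dz_const_on(1)[OF U that]) (simp add: U1)
    then show ?thesis unfolding dz_lorC[OF dF[OF that] dF[OF that]] by (simp add: lorC_sym[of "Dz F w"])
  qed
  have Nn: "lor (N1 w) (f w) = 0" "lor (N1 w) (pdx f w) = 0" "lor (N1 w) (pdy f w) = 0"
     "lor (N2 w) (f w) = 0" "lor (N2 w) (pdx f w) = 0" "lor (N2 w) (pdy f w) = 0"
     "lor (N1 w) (N1 w) = 1" "lor (N2 w) (N2 w) = -1" "lor (N1 w) (N2 w) = 0" "lor (N2 w) (N1 w) = 0"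
    if "w \<in> U" for w
  proof -
    show "lor (N1 w) (f w) = 0" "lor (N1 w) (pdx f w) = 0" "lor (N1 w) (pdy f w) = 0"
     "lor (N2 w) (f w) = 0" "lor (N2 w) (pdx f w) = 0" "lor (N2 w) (pdy f w) = 0"
     "lor (N1 w) (N1 w) = 1" "lor (N2 w) (N2 w) = -1" "lor (N1 w) (N2 w) = 0"
      using N_normal N_orthonormal that by auto
    then show "lor (N2 w) (N1 w) = 0" by (simp add: lor_sym)
  qed
  have Hn: "lor (H w) (f w) = 0" "lor (H w) (pdx f w) = 0" "lor (H w) (pdy f w) = 0"
    "lor (H w) (H w) = 0" if "w \<in> U" for w
    using Nn[OF that] by (simp_all add: Hform[OF that] lor_simps)
  have U6: "lorC (Hc w) (Hc w) = 0" if "w \<in> U" for w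
    by (simp add: Hc_def lorC_cvec Hn[OF that])
  have U7: "lorC (Hc w) (Dz F w) = 0" if "w \<in> U" for w
    unfolding Fz_eq[OF that] Hc_def lorC_cvec_comb by (simp add: Hn[OF that])
  have U8: "lorC (Hc w) (F w) = 0" if "w \<in> U" for w
    by (simp add: Hc_def F_def lorC_cvec Hn[OF that])
  have U5: "Dzb (Dz F) w = E w *s (Hc w - F w)" if "w \<in> U" for w
  proof -
    have px: "pdx F w' = cvec (pdx f w')" "pdy F w' = cvec (pdy f w')" if "w' \<in> U" for w'
      unfolding F_def using pdx_linear[OF bl_cvec df[OF that]] pdy_linear[OF bl_cvec df[OF that]] by auto
    have "pdx (pdx F) w = pdx (\<lambda>w. cvec (pdx f w)) w" by (rule pdx_local[OF U that]) (simp add: px)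
    also have "\<dots> = cvec (pdx (pdx f) w)" by (rule pdx_linear[OF bl_cvec dfx(1)[OF that]])
    finally have 1: "pdx (pdx F) w = cvec (pdx (pdx f) w)" .
    have "pdy (pdy F) w = pdy (\<lambda>w. cvec (pdy f w)) w" by (rule pdy_local[OF U that]) (simp add: px)
    also have "\<dots> = cvec (pdy (pdy f) w)" by (rule pdy_linear[OF bl_cvec dfx(2)[OF that]])
    finally have 2: "pdy (pdy F) w = cvec (pdy (pdy f) w)" .
    have "H w - f w = (1 / e w) *\<^sub>R ((1/4) *\<^sub>R (pdx (pdx f) w + pdy (pdy f) w))"
      by (simp add: Heq)
    then have 3: "(1/4) *\<^sub>R (pdx (pdx f) w + pdy (pdy f) w) = e w *\<^sub>R (H w - f w)"
      using ne[OF that] by simp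
    have "Dzb (Dz F) w = (1/4) *s (pdx (pdx F) w + pdy (pdy F) w)" by (rule Dz_comm(2)[OF U sF that])
    also have "\<dots> = cvec ((1/4) *\<^sub>R (pdx (pdx f) w + pdy (pdy f) w))"
      unfolding 1 2 cvec_scaleR' cvec_add by simp
    also have "\<dots> = E w *s (Hc w - F w)"
      unfolding 3 cvec_scaleR' cvec_diff by (simp add: E_def Hc_def F_def)
    finally show ?thesis .
  qed
  have sFzb: "smooth_on U (Dzb F)" by (rule smooth_Dzb[OF U sF])
  have dFzb: "Dzb F differentiable (at w)" if "w \<in> U" for w using smooth_diffat[OF U sFzb that] .
  have comm: "Dzb (Dz F) w = Dz (Dzb F) w" if "w \<in> U" for w by (rule Dz_comm(1)[OF U sF that])
  have fa: "lorC (F z) (\<phi> z) = 0" if z: "z \<in> U" for z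
  proof -
    have "dz (\<lambda>w. lorC (F w) (Dz F w)) z = 0" by (rule dz_const_on(1)[OF U z]) (simp add: U2)
    then show ?thesis unfolding dz_lorC[OF dF[OF z] dFz[OF z]] by (simp add: U3[OF z] \<phi>_def)
  qed
  have fb: "lorC (Dz F z) (\<phi> z) = 0" if z: "z \<in> U" for z
  proof -
    have "dz (\<lambda>w. lorC (Dz F w) (Dz F w)) z = 0" by (rule dz_const_on(1)[OF U z]) (simp add: U3)
    then show ?thesis unfolding dz_lorC[OF dFz[OF z] dFz[OF z]] by (simp add: \<phi>_def lorC_sym[of "Dz (Dz F) z"])
  qed
  have fc: "lorC (\<phi> z) (Dzb F z) = dz E z" if z: "z \<in> U" for z
  proof -
    have "dz (\<lambda>w. lorC (Dz F w) (Dzb F w)) z = dz E z" by (rule dz_local(1)[OF U z]) (simp add: U4)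
    moreover have "lorC (Dz F z) (Dz (Dzb F) z) = 0"
      unfolding comm[OF z, symmetric] U5[OF z]
      by (simp add: lorC_simps lorC_sym[of "Dz F z"] U7[OF z] U2[OF z])
    ultimately show ?thesis unfolding dz_lorC[OF dFz[OF z] dFzb[OF z]] by (simp add: \<phi>_def)
  qed
  have fd: "lorC (Dz Hc z) (Dz F z) = - lorC (Hc z) (\<phi> z)" if z: "z \<in> U" for z
  proof -
    have "dz (\<lambda>w. lorC (Hc w) (Dz F w)) z = 0" by (rule dz_const_on(1)[OF U z]) (simp add: U7)
    then show ?thesis unfolding dz_lorC[OF dHc[OF z] dFz[OF z]] by (simp add: \<phi>_def add_eq_0_iff)
  qed
  have fe: "lorC (Dz Hc z) (Hc z) = 0" if z: "z \<in> U" for z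
  proof -
    have "dz (\<lambda>w. lorC (Hc w) (Hc w)) z = 0" by (rule dz_const_on(1)[OF U z]) (simp add: U6)
    then show ?thesis unfolding dz_lorC[OF dHc[OF z] dHc[OF z]] by (simp add: lorC_sym[of "Hc z"])
  qed
  have ff: "lorC (Dzb Hc z) (Dz F z) = 0" if z: "z \<in> U" for z
  proof -
    have "dzb (\<lambda>w. lorC (Hc w) (Dz F w)) z = 0" by (rule dz_const_on(2)[OF U z]) (simp add: U7)
    moreover have "lorC (Hc z) (Dzb (Dz F) z) = 0"
      unfolding U5[OF z] by (simp add: lorC_simps U6[OF z] U8[OF z])
    ultimately show ?thesis unfolding dzb_lorC[OF dHc[OF z] dFz[OF z]] by simp
  qed
  have fg: "lorC (Dzb Hc z) (Hc z) = 0" if z: "z \<in> U" for z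
  proof -
    have "dzb (\<lambda>w. lorC (Hc w) (Hc w)) z = 0" by (rule dz_const_on(2)[OF U z]) (simp add: U6)
    then show ?thesis unfolding dzb_lorC[OF dHc[OF z] dHc[OF z]] by (simp add: lorC_sym[of "Hc z"])
  qed
  have fh: "Dzb \<phi> z = dz E z *s (Hc z - F z) + E z *s (Dz Hc z - Dz F z)" if z: "z \<in> U" for z
  proof -
    have d1: "(\<lambda>w. Hc w - F w) differentiable (at z)"
      using dHc[OF z] dF[OF z] by (rule differentiable_diff)
    have "Dzb \<phi> z = Dz (Dzb (Dz F)) z" unfolding \<phi>_def by (rule Dz_comm(1)[OF U sFz z])
    also have "\<dots> = Dz (\<lambda>w. E w *s (Hc w - F w)) z" by (rule Dz_local(1)[OF U z]) (simp add: U5)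
    also have "\<dots> = dz E z *s (Hc z - F z) + E z *s Dz (\<lambda>w. Hc w - F w) z"
      by (rule Dz_smult[OF dE[OF z] d1])
    also have "\<dots> = dz E z *s (Hc z - F z) + E z *s (Dz Hc z - Dz F z)"
      by (simp add: Dz_diff[OF dHc[OF z] dF[OF z]])
    finally show ?thesis .
  qed
  have point: "dzb (\<lambda>w. lorC (\<phi> w) (\<phi> w)) z
        = complex_of_real (lor (pdx f z) (pdx f z)) * lorC (Dz Hc z) (cvec (N1 z))
          * (lorC (\<phi> z) (cvec (N1 z)) + lorC (\<phi> z) (cvec (N2 z)))
      \<and> lorC (\<phi> z) (\<phi> z) = (lorC (\<phi> z) (cvec (N1 z)) - lorC (\<phi> z) (cvec (N2 z)))
          * (lorC (\<phi> z) (cvec (N1 z)) + lorC (\<phi> z) (cvec (N2 z)))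
      \<and> dzb (\<lambda>w. lorC (\<phi> w) (Hc w)) z
        = lorC (Dzb Hc z) (cvec (N1 z)) * (lorC (\<phi> z) (cvec (N1 z)) + lorC (\<phi> z) (cvec (N2 z)))
      \<and> lorC (\<phi> z) (Hc z) = complex_of_real (h z) * (lorC (\<phi> z) (cvec (N1 z)) + lorC (\<phi> z) (cvec (N2 z)))"
    if z: "z \<in> U" for z
  proof -
    define lam where "lam = lor (pdx f z) (pdx f z)"
    define cx where "cx = cvec (pdx f z)"
    define cy where "cy = cvec (pdy f z)"
    define cN1 where "cN1 = cvec (N1 z)"
    define cN2 where "cN2 = cvec (N2 z)"
    have lam: "lam > 0" using spacelike_immersion z by (simp add: lam_def)
    have c: "lor (pdx f z) (pdx f z) = lam" "lor (pdy f z) (pdy f z) = lam" "lor (pdx f z) (pdy f z) = 0"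
      "lor (pdy f z) (pdx f z) = 0" using conformal z lor_sym unfolding lam_def by metis+
    have "lorC (F z) (Dz F z) = (1/2) * complex_of_real (lor (f z) (pdx f z)) + (- \<i>/2) * of_real (lor (f z) (pdy f z))"
      unfolding Fz_eq[OF z] by (simp only: F_def lorC_cvec_comb)
    then have "(1/2) * complex_of_real (lor (f z) (pdx f z)) + (- \<i>/2) * of_real (lor (f z) (pdy f z)) = 0"
      using U2[OF z] by simp
    from arg_cong[OF this, of Re] arg_cong[OF this, of Im]
    have fperp: "lor (f z) (pdx f z) = 0" "lor (f z) (pdy f z) = 0" by simp_all
    have Fzc: "Dz F z = (1/2) *s cx + (- \<i>/2) *s cy" unfolding cx_def cy_def by (rule Fz_eq[OF z])
    have Fzbc: "Dzb F z = (1/2) *s cx + (\<i>/2) *s cy" unfolding cx_def cy_def by (rule Fzb_eq[OF z])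
    have Hcz: "Hc z = complex_of_real (h z) *s (cN1 + cN2)"
      unfolding Hc_def Hform[OF z] cvec_scaleR' cvec_add cN1_def cN2_def ..
    have Ez: "E z = complex_of_real lam / 2" using c by (simp add: E_def e_def)
    have h0: "h z \<noteq> 0" using H_nonzero z by auto
    have Nz: "lor (N1 z) (f z) = 0" "lor (N1 z) (pdx f z) = 0" "lor (N1 z) (pdy f z) = 0"
     "lor (N2 z) (f z) = 0" "lor (N2 z) (pdx f z) = 0" "lor (N2 z) (pdy f z) = 0"
     "lor (N1 z) (N1 z) = 1" "lor (N2 z) (N2 z) = -1" "lor (N1 z) (N2 z) = 0" "lor (N2 z) (N1 z) = 0"
      using Nn[OF z] by auto
    have Nz': "lor (f z) (N1 z) = 0" "lor (pdx f z) (N1 z) = 0" "lor (pdy f z) (N1 z) = 0"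
     "lor (f z) (N2 z) = 0" "lor (pdx f z) (N2 z) = 0" "lor (pdy f z) (N2 z) = 0"
      using Nz(1-6) lor_sym by metis+
    have o: "lorC (F z) cx = 0" "lorC (F z) cy = 0" "lorC (F z) cN1 = 0" "lorC (F z) cN2 = 0"
      "lorC cx cy = 0" "lorC cx cN1 = 0" "lorC cx cN2 = 0" "lorC cy cN1 = 0" "lorC cy cN2 = 0"
      "lorC cN1 cN2 = 0"
      unfolding F_def cx_def cy_def cN1_def cN2_def lorC_cvec by (simp_all add: fperp c Nz Nz')
    have n: "lorC (F z) (F z) = 1" "lorC cx cx = of_real lam" "lorC cy cy = of_real lam"
      "lorC cN1 cN1 = 1" "lorC cN2 cN2 = -1"
      using U1[OF z] unfolding cx_def cy_def cN1_def cN2_def lorC_cvec by (simp_all add: c Nz)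
    have lamC: "complex_of_real lam \<noteq> 0" using lam by simp
    have PS: "lorC v w = lorC v (F z) * lorC w (F z) / 1 + lorC v cx * lorC w cx / of_real lam
       + lorC v cy * lorC w cy / of_real lam + lorC v cN1 * lorC w cN1 / 1 + lorC v cN2 * lorC w cN2 / (-1)"
      for v w
      using parseval5[of "F z" cx cy cN1 cN2 v w, OF o, unfolded n, OF _ lamC lamC] by simp
    define dE where "dE = dz E z"
    define X2 where "X2 = lorC (\<phi> z) cx"
    define X3 where "X3 = lorC (\<phi> z) cy"
    define p1 where "p1 = lorC (\<phi> z) cN1"
    define p2 where "p2 = lorC (\<phi> z) cN2"
    define \<delta> where "\<delta> = lorC (Hc z) (\<phi> z)"
    have fb': "lorC (Dz F z) (\<phi> z) = (1/2) * X2 + (- \<i>/2) * X3"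
      unfolding Fzc X2_def X3_def by (simp only: lorC_simps lorC_sym[of "\<phi> z"])
    have fc': "lorC (\<phi> z) (Dzb F z) = (1/2) * X2 + (\<i>/2) * X3"
      unfolding Fzbc X2_def X3_def by (simp only: lorC_simps)
    have e1: "(1/2) * X2 + (- \<i>/2) * X3 = 0" using fb[OF z] fb' by simp
    have e2: "(1/2) * X2 + (\<i>/2) * X3 = dE" using fc[OF z] fc' by (simp add: dE_def)
    have X2v: "X2 = dE" using e1 e2 by (simp add: field_simps)
    have X3v: "X3 = - \<i> * dE" using e1 e2 X2v by (simp add: field_simps)
    define A2 where "A2 = lorC (Dz Hc z) cx"
    define A3 where "A3 = lorC (Dz Hc z) cy"
    define a1 where "a1 = lorC (Dz Hc z) cN1"
    define a2 where "a2 = lorC (Dz Hc z) cN2"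
    define B2 where "B2 = lorC (Dzb Hc z) cx"
    define B3 where "B3 = lorC (Dzb Hc z) cy"
    define b1 where "b1 = lorC (Dzb Hc z) cN1"
    define b2 where "b2 = lorC (Dzb Hc z) cN2"
    have fd': "lorC (Dz Hc z) (Dz F z) = A2 / 2 - \<i> * A3 / 2"
      unfolding Fzc A2_def A3_def by (simp add: lorC_simps)
    have fdx: "A2 / 2 - \<i> * A3 / 2 = - \<delta>" using fd[OF z] fd' by (simp add: \<delta>_def)
    have ff': "lorC (Dzb Hc z) (Dz F z) = B2 / 2 - \<i> * B3 / 2"
      unfolding Fzc B2_def B3_def by (simp add: lorC_simps)
    have ffx: "B2 / 2 - \<i> * B3 / 2 = 0" using ff[OF z] ff' by simp
    have "lorC (Dz Hc z) (Hc z) = complex_of_real (h z) * (a1 + a2)"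
      unfolding Hcz a1_def a2_def by (simp add: lorC_simps distrib_left)
    then have a2v: "a2 = - a1" using fe[OF z] h0 by (simp add: add_eq_0_iff)
    have "lorC (Dzb Hc z) (Hc z) = complex_of_real (h z) * (b1 + b2)"
      unfolding Hcz b1_def b2_def by (simp add: lorC_simps distrib_left)
    then have b2v: "b2 = - b1" using fg[OF z] h0 by (simp add: add_eq_0_iff)
    have \<delta>v: "\<delta> = complex_of_real (h z) * (p1 + p2)"
      unfolding \<delta>_def Hcz p1_def p2_def by (simp add: lorC_simps lorC_sym[of _ "\<phi> z"] distrib_left)
    have X1: "lorC (\<phi> z) (F z) = 0" using fa[OF z] by (simp add: lorC_sym)
    have d\<phi>z: "\<phi> differentiable (at z)" by (rule d\<phi>[OF z])
    have PV: "lorC (Dz Hc z) (\<phi> z) = A2 * X2 / of_real lam + A3 * X3 / of_real lam + a1 * p1 - a2 * p2"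
      using PS[of "Dz Hc z" "\<phi> z"] X1 unfolding A2_def A3_def a1_def a2_def X2_def X3_def p1_def p2_def
      by simp
    have Qzb: "dzb (\<lambda>w. lorC (\<phi> w) (\<phi> w)) z = 2 * (dE * \<delta> + E z * lorC (Dz Hc z) (\<phi> z))"
      unfolding dzb_lorC[OF d\<phi>z d\<phi>z] lorC_sym[of "\<phi> z" "Dzb \<phi> z"] fh[OF z]
      using fa[OF z] fb[OF z] by (simp add: lorC_simps dE_def \<delta>_def lorC_sym[of "\<phi> z" "Hc z"]
        lorC_sym[of "\<phi> z" "Dz Hc z"] lorC_sym[of "\<phi> z" "Dz F z"] lorC_sym[of "\<phi> z" "F z"])
    have R1: "dzb (\<lambda>w. lorC (\<phi> w) (\<phi> w)) z = of_real lam * a1 * (p1 + p2)"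
      by (rule alg_Q[OF lamC Ez X2v X3v fdx a2v PV Qzb])
    have PV2: "lorC (\<phi> z) (Dzb Hc z) = X2 * B2 / of_real lam + X3 * B3 / of_real lam + p1 * b1 - p2 * b2"
      using PS[of "\<phi> z" "Dzb Hc z"] X1 unfolding B2_def B3_def b1_def b2_def X2_def X3_def p1_def p2_def
      by simp
    have R3': "lorC (\<phi> z) (Dzb Hc z) = b1 * (p1 + p2)"
      by (rule alg_d[OF X2v X3v ffx b2v PV2])
    have first0: "lorC (Dzb \<phi> z) (Hc z) = 0"
      unfolding fh[OF z] using U6[OF z] U8[OF z] fe[OF z] U7[OF z]
      by (simp add: lorC_simps lorC_sym[of "F z" "Hc z"] lorC_sym[of "Dz F z" "Hc z"])
    have R3: "dzb (\<lambda>w. lorC (\<phi> w) (Hc w)) z = b1 * (p1 + p2)"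
      unfolding dzb_lorC[OF d\<phi>z dHc[OF z]] first0 R3' by simp
    have R2: "lorC (\<phi> z) (\<phi> z) = (p1 - p2) * (p1 + p2)"
    proof (rule alg_q[OF X2v X3v X1])
      show "lorC (\<phi> z) (\<phi> z) = lorC (\<phi> z) (F z) * lorC (\<phi> z) (F z) / 1 + X2 * X2 / of_real lam
        + X3 * X3 / of_real lam + p1 * p1 / 1 + p2 * p2 / (- 1)"
        unfolding X2_def X3_def p1_def p2_def by (rule PS)
    qed
    have R4: "lorC (\<phi> z) (Hc z) = complex_of_real (h z) * (p1 + p2)"
      using \<delta>v by (simp add: \<delta>_def lorC_sym[of "\<phi> z"])
    show ?thesis using R1 R2 R3 R4
      by (simp add: lam_def a1_def b1_def p1_def p2_def cN1_def cN2_def)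
  qed
  have par: "(nabla_perp_x N1 N2 (meanH f) z = 0 \<and> nabla_perp_y N1 N2 (meanH f) z = 0)
      \<longleftrightarrow> lor (pdx H z) (N1 z) = 0 \<and> lor (pdy H z) (N1 z) = 0" if z: "z \<in> U" for z
  proof -
    have vanish: "lor v (N1 z) *\<^sub>R N1 z - lor v (N2 z) *\<^sub>R N2 z = 0 \<longleftrightarrow> lor v (N1 z) = 0 \<and> lor v (N2 z) = 0"
      for v
    proof
      assume 0: "lor v (N1 z) *\<^sub>R N1 z - lor v (N2 z) *\<^sub>R N2 z = 0"
      have e: "lor (lor v (N1 z) *\<^sub>R N1 z - lor v (N2 z) *\<^sub>R N2 z) (N1 z) = lor v (N1 z)"
        "lor (lor v (N1 z) *\<^sub>R N1 z - lor v (N2 z) *\<^sub>R N2 z) (N2 z) = lor v (N2 z)"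
        using Nn[OF z] by (simp_all add: lor_simps)
      show "lor v (N1 z) = 0 \<and> lor v (N2 z) = 0" using e[unfolded 0] by simp
    qed simp
    have "lorC (Dz Hc z) (Hc z) = (1/2) * complex_of_real (lor (pdx H z) (H z)) + (- \<i>/2) * of_real (lor (pdy H z) (H z))"
      unfolding Hz_eq[OF z] by (simp only: Hc_def lorC_simps lorC_cvec)
    then have "(1/2) * complex_of_real (lor (pdx H z) (H z)) + (- \<i>/2) * of_real (lor (pdy H z) (H z)) = 0"
      using fe[OF z] by simp
    from arg_cong[OF this, of Re] arg_cong[OF this, of Im]
    have HH: "lor (pdx H z) (H z) = 0" "lor (pdy H z) (H z) = 0" by simp_all
    have h0: "h z \<noteq> 0" using H_nonzero z by auto
    have N2x: "lor (pdx H z) (N2 z) = - lor (pdx H z) (N1 z)" "lor (pdy H z) (N2 z) = - lor (pdy H z) (N1 z)"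
      using HH h0 by (simp_all add: Hform[OF z] lor_simps add_eq_0_iff)
    show ?thesis
      unfolding nabla_perp_x_def nabla_perp_y_def normal_proj_def H_def[symmetric] vanish
      unfolding N2x by auto
  qed
  have a1e: "lorC (Dz Hc z) (cvec (N1 z)) = 0 \<longleftrightarrow> lor (pdx H z) (N1 z) = 0 \<and> lor (pdy H z) (N1 z) = 0"
    if z: "z \<in> U" for z
  proof -
    have "lorC (Dz Hc z) (cvec (N1 z)) = (1/2) * complex_of_real (lor (pdx H z) (N1 z)) + (- \<i>/2) * of_real (lor (pdy H z) (N1 z))"
      unfolding Hz_eq[OF z] by (simp only: lorC_simps lorC_cvec)
    note eq = this
    show ?thesis unfolding eq by (simp add: complex_eq_iff)
  qed
  have b1e: "lorC (Dzb Hc z) (cvec (N1 z)) = 0 \<longleftrightarrow> lor (pdx H z) (N1 z) = 0 \<and> lor (pdy H z) (N1 z) = 0"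
    if z: "z \<in> U" for z
  proof -
    have "lorC (Dzb Hc z) (cvec (N1 z)) = (1/2) * complex_of_real (lor (pdx H z) (N1 z)) + (\<i>/2) * of_real (lor (pdy H z) (N1 z))"
      unfolding Hzb_eq[OF z] by (simp only: lorC_simps lorC_cvec)
    note eq = this
    show ?thesis unfolding eq by (simp add: complex_eq_iff)
  qed
  have pn: "lorC (\<phi> z) (cvec (N1 z)) + lorC (\<phi> z) (cvec (N2 z)) \<noteq> 0" if z: "z \<in> U" for z
    using non_isotropic z point[OF z] by (auto simp: Fc \<phi>_def)
  have lam0: "complex_of_real (lor (pdx f z) (pdx f z)) \<noteq> 0" if z: "z \<in> U" for z
    using spacelike_immersion z by auto
  have holoQ: "(\<lambda>z. lorC (\<phi> z) (\<phi> z)) holomorphic_on U \<longleftrightarrow>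
      (\<forall>z\<in>U. lor (pdx H z) (N1 z) = 0 \<and> lor (pdy H z) (N1 z) = 0)"
  proof -
    have "(\<lambda>z. lorC (\<phi> z) (\<phi> z)) holomorphic_on U \<longleftrightarrow> (\<forall>z\<in>U. dzb (\<lambda>z. lorC (\<phi> z) (\<phi> z)) z = 0)"
      by (rule holo_iff[OF U diff_bilinear[OF bb_lorC d\<phi> d\<phi>]])
    also have "\<dots> \<longleftrightarrow> (\<forall>z\<in>U. lorC (Dz Hc z) (cvec (N1 z)) = 0)"
      using point pn lam0 by auto
    also have "\<dots> \<longleftrightarrow> (\<forall>z\<in>U. lor (pdx H z) (N1 z) = 0 \<and> lor (pdy H z) (N1 z) = 0)"
      using a1e by auto
    finally show ?thesis .
  qed
  have holoD: "(\<lambda>z. lorC (\<phi> z) (Hc z)) holomorphic_on U \<longleftrightarrow>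
      (\<forall>z\<in>U. lor (pdx H z) (N1 z) = 0 \<and> lor (pdy H z) (N1 z) = 0)"
  proof -
    have "(\<lambda>z. lorC (\<phi> z) (Hc z)) holomorphic_on U \<longleftrightarrow> (\<forall>z\<in>U. dzb (\<lambda>z. lorC (\<phi> z) (Hc z)) z = 0)"
      by (rule holo_iff[OF U diff_bilinear[OF bb_lorC d\<phi> dHc]])
    also have "\<dots> \<longleftrightarrow> (\<forall>z\<in>U. lorC (Dzb Hc z) (cvec (N1 z)) = 0)"
      using point pn by auto
    also have "\<dots> \<longleftrightarrow> (\<forall>z\<in>U. lor (pdx H z) (N1 z) = 0 \<and> lor (pdy H z) (N1 z) = 0)"
      using b1e by auto
    finally show ?thesis .
  qed
  have congD: "(\<lambda>z. complex_of_real (h z) *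
                    (lorC (Dz (Dz (cvec \<circ> f)) z) (cvec (N1 z))
                     - (- lorC (Dz (Dz (cvec \<circ> f)) z) (cvec (N2 z))))) holomorphic_on U
       \<longleftrightarrow> (\<lambda>z. lorC (\<phi> z) (Hc z)) holomorphic_on U"
    by (rule holomorphic_cong) (use point in \<open>auto simp: Fc \<phi>_def\<close>)
  have Qeq: "(\<lambda>z. lorC (Dz (Dz (cvec \<circ> f)) z) (Dz (Dz (cvec \<circ> f)) z)) = (\<lambda>z. lorC (\<phi> z) (\<phi> z))"
    by (simp add: Fc \<phi>_def)
  show ?thesis
    unfolding Qeq congD holoQ holoD using par by auto
qed

end
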